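(* In the supersample setting described in the context, let $\ell$ be the zero-one loss and let $\mathcal A$ be an interpolating algorithm. Then \[ \frac{1}{n}\sum_{i=1}^nI(L^+_{i};U_i)\leq H\!\left(\frac{L_\mu}{2}\right). \]
   Context: Let $\mathcal Z=\mathcal X\times\mathcal Y$ and let $\mu$ be a distribution on $\mathcal Z$. A (possibly randomized) learning algorithm $\mathcal A$ maps a training sample in $\mathcal Z^n$ to a hypothesis $W\in\mathcal W$; each $w$ defines a predictor $f_w:\mathcal X\to\mathcal Y$, and the zero-one loss is $\ell(w,(x,y))=\mathbb 1\{f_w(x)\neq y\}$. For $S\sim\mu^n$ and $W\sim P_{W|S}$, $L_\mu=\mathbb E_W\mathbb E_{Z'\sim\mu}[\ell(W,Z')]$ with $Z'$ independent of $(S,W)$. Supersample: $\widetilde Z=(\widetilde Z_{i,j})_{i\in\{1,\dots,n\},j\in\{0,1\}}$ with i.i.d. entries of law $\mu$; $U=(U_1,\dots,U_n)$ uniform on $\{0,1\}^n$, independent of $\widetilde Z$; $W=\mathcal A(\widetilde Z_U)$ with $\widetilde Z_U=(\widetilde Z_{1,U_1},\dots,\widetilde Z_{n,U_n})$; $L_i^+=\ell(W,\widetilde Z_{i,0})$. The algorithm is interpolating if $\ell(W,\widetilde Z_{i,U_i})=0$ almost surely for every $i$. $H(p)=-p\ln p-(1-p)\ln(1-p)$ is the binary entropy function and mutual information is in nats. *)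

theory Defs
  imports "HOL-Probability.Probability"
begin

text \<open>Binary entropy in nats (the terms p ln p vanish at p = 0 by multiplication).\<close>
definition bin_entropy :: "real \<Rightarrow> real" where
  "bin_entropy p = - p * ln p - (1 - p) * ln (1 - p)"

definition zo_loss :: "('w \<Rightarrow> 'x \<Rightarrow> 'y) \<Rightarrow> 'w \<Rightarrow> 'x \<times> 'y \<Rightarrow> nat" where
  "zo_loss f w z = (if f w (fst z) \<noteq> snd z then 1 else 0)"

text \<open>Supersample: entries indexed by (i,j) with i < n and j :: bool (False = 0, True = 1).\<close>
definition supersample_space :: "nat \<Rightarrow> ('x \<times> 'y) measure \<Rightarrow> ((nat \<times> bool) \<Rightarrow> 'x \<times> 'y) measure" where
  "supersample_space n \<mu> = PiM ({..<n} \<times> UNIV) (\<lambda>_. \<mu>)"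

definition selector_space :: "nat \<Rightarrow> (nat \<Rightarrow> bool) measure" where
  "selector_space n = PiM {..<n} (\<lambda>_. measure_pmf (bernoulli_pmf (1/2)))"

definition selected_sample :: "nat \<Rightarrow> ((nat \<times> bool) \<Rightarrow> 'z) \<Rightarrow> (nat \<Rightarrow> bool) \<Rightarrow> (nat \<Rightarrow> 'z)" where
  "selected_sample n zt u = restrict (\<lambda>i. zt (i, u i)) {..<n}"

text \<open>Joint law of ((Z~, U), W) where W ~ A(Z~_U), A a (randomized) algorithm given as a Markov kernel
  from samples to hypotheses (measurable space Wsp).\<close>
definition joint_law ::
  "nat \<Rightarrow> ('x \<times> 'y) measure \<Rightarrow> 'w measure \<Rightarrow> ((nat \<Rightarrow> 'x \<times> 'y) \<Rightarrow> 'w measure)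
     \<Rightarrow> ((((nat \<times> bool) \<Rightarrow> 'x \<times> 'y) \<times> (nat \<Rightarrow> bool)) \<times> 'w) measure" where
  "joint_law n \<mu> Wsp A =
     (supersample_space n \<mu> \<Otimes>\<^sub>M selector_space n) \<bind>
       (\<lambda>zu. distr (A (selected_sample n (fst zu) (snd zu)))
                   ((supersample_space n \<mu> \<Otimes>\<^sub>M selector_space n) \<Otimes>\<^sub>M Wsp)
                   (\<lambda>w. (zu, w)))"

definition pop_risk ::
  "nat \<Rightarrow> ('x \<times> 'y) measure \<Rightarrow> 'w measure \<Rightarrow> ((nat \<Rightarrow> 'x \<times> 'y) \<Rightarrow> 'w measure)
     \<Rightarrow> ('w \<Rightarrow> 'x \<Rightarrow> 'y) \<Rightarrow> real" where
  "pop_risk n \<mu> Wsp A f =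
     (\<integral>\<omega>. (\<integral>z. real (zo_loss f (snd \<omega>) z) \<partial>\<mu>) \<partial>joint_law n \<mu> Wsp A)"

definition Lplus :: "('w \<Rightarrow> 'x \<Rightarrow> 'y) \<Rightarrow> nat \<Rightarrow>
     ((((nat \<times> bool) \<Rightarrow> 'x \<times> 'y) \<times> (nat \<Rightarrow> bool)) \<times> 'w) \<Rightarrow> nat" where
  "Lplus f i \<omega> = zo_loss f (snd \<omega>) (fst (fst \<omega>) (i, False))"

definition Usel :: "nat \<Rightarrow> ((((nat \<times> bool) \<Rightarrow> 'x \<times> 'y) \<times> (nat \<Rightarrow> bool)) \<times> 'w) \<Rightarrow> bool" where
  "Usel i \<omega> = snd (fst \<omega>) i"

end

theory Submission imports Defs begin

lemma (in prob_space) distributed_countable: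
  fixes X :: "'a \<Rightarrow> 'b::countable"
  assumes X[measurable]: "X \<in> M \<rightarrow>\<^sub>M count_space UNIV"
  shows "distributed M (count_space UNIV) X (\<lambda>a. ennreal (prob {\<omega> \<in> space M. X \<omega> = a}))"
  unfolding distributed_def
proof (intro conjI)
  show "distr M (count_space UNIV) X = density (count_space UNIV) (\<lambda>a. ennreal (prob {\<omega> \<in> space M. X \<omega> = a}))"
  proof (rule measure_eqI_countable[where A=UNIV])
    fix a :: 'b
    have s: "{\<omega> \<in> space M. X \<omega> = a} \<in> events" by measurable
    have "emeasure (distr M (count_space UNIV) X) {a} = emeasure M {\<omega> \<in> space M. X \<omega> = a}"
      by (subst emeasure_distr) (auto intro!: arg_cong2[where f=emeasure])
    also have "\<dots> = ennreal (prob {\<omega> \<in> space M. X \<omega> = a})" by (simp add: emeasure_eq_measure)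
    finally show "emeasure (distr M (count_space UNIV) X) {a} = emeasure (density (count_space UNIV) (\<lambda>a. ennreal (prob {\<omega> \<in> space M. X \<omega> = a}))) {a}"
      by (simp add: emeasure_density nn_integral_indicator_singleton)
  qed auto
qed auto

lemma int_count_support:
  fixes g :: "'b \<Rightarrow> real"
  assumes "finite B" "\<And>x. x \<notin> B \<Longrightarrow> g x = 0"
  shows "integral\<^sup>L (count_space UNIV) g = (\<Sum>x\<in>B. g x)"
proof -
  have fin: "finite {a \<in> UNIV. g a \<noteq> 0}"
    using assms by (auto intro: finite_subset[of _ B])
  show ?thesis
    using assms by (subst lebesgue_integral_count_space_finite_support[OF fin])
      (auto intro!: sum.mono_neutral_cong_left)
qed

lemma MI_count:
  fixes X :: "'a \<Rightarrow> 'b::countable" and Y :: "'a \<Rightarrow> 'c::countable"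
  assumes M: "prob_space M"
    and X[measurable]: "X \<in> M \<rightarrow>\<^sub>M count_space UNIV" and Y[measurable]: "Y \<in> M \<rightarrow>\<^sub>M count_space UNIV"
    and B: "finite B"
    and supp: "\<And>p. p \<notin> B \<Longrightarrow> measure M {\<omega> \<in> space M. (X \<omega>, Y \<omega>) = p} = 0"
  defines "Px \<equiv> \<lambda>a. measure M {\<omega> \<in> space M. X \<omega> = a}"
    and "Py \<equiv> \<lambda>a. measure M {\<omega> \<in> space M. Y \<omega> = a}"
    and "Pxy \<equiv> \<lambda>p. measure M {\<omega> \<in> space M. (X \<omega>, Y \<omega>) = p}"
  shows "prob_space.mutual_information M (exp 1) (count_space UNIV) (count_space UNIV) X Y
     = (\<Sum>p\<in>B. Pxy p * ln (Pxy p / (Px (fst p) * Py (snd p))))"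
proof -
  interpret information_space M "exp 1"
    using M by (simp add: information_space_def information_space_axioms_def)
  have ST: "(count_space UNIV :: 'b measure) \<Otimes>\<^sub>M (count_space UNIV :: 'c measure) = count_space UNIV"
    by (subst pair_measure_countable) auto
  have XY: "(\<lambda>\<omega>. (X \<omega>, Y \<omega>)) \<in> M \<rightarrow>\<^sub>M count_space UNIV"
    by (subst ST[symmetric]) measurable
  have dX: "distributed M (count_space UNIV) X (\<lambda>a. ennreal (Px a))"
    unfolding Px_def by (rule distributed_countable[OF X])
  have dY: "distributed M (count_space UNIV) Y (\<lambda>a. ennreal (Py a))"
    unfolding Py_def by (rule distributed_countable[OF Y])
  have dXY: "distributed M (count_space UNIV \<Otimes>\<^sub>M count_space UNIV) (\<lambda>\<omega>. (X \<omega>, Y \<omega>)) (\<lambda>a. ennreal (Pxy a))"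
    unfolding Pxy_def ST by (rule distributed_countable[OF XY])
  have sf1: "sigma_finite_measure (count_space (UNIV :: 'b set))"
    by (rule sigma_finite_measure_count_space_countable) simp
  have sf2: "sigma_finite_measure (count_space (UNIV :: 'c set))"
    by (rule sigma_finite_measure_count_space_countable) simp
  have "mutual_information (exp 1) (count_space UNIV) (count_space UNIV) X Y
     = integral\<^sup>L (count_space UNIV \<Otimes>\<^sub>M count_space UNIV) (\<lambda>p. Pxy p * log (exp 1) (Pxy p / (Px (fst p) * Py (snd p))))"
    by (rule mutual_information_distr[OF sf1 sf2 dX _ dY _ dXY]) (auto simp: Px_def Py_def Pxy_def)
  also have "\<dots> = (\<Sum>p\<in>B. Pxy p * ln (Pxy p / (Px (fst p) * Py (snd p))))"
    unfolding ST using B supp by (subst int_count_support[of B]) (auto simp: Pxy_def log_def)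
  finally show ?thesis .
qed

lemma arith_MI:
  fixes q :: real
  assumes q0: "0 \<le> q" and q1: "q \<le> 1"
  shows "(1/2) * ln ((1/2) / ((1 - q/2) * (1/2))) + ((1-q)/2) * ln (((1-q)/2) / ((1 - q/2) * (1/2)))
       + 0 * ln (0 / ((q/2) * (1/2))) + (q/2) * ln ((q/2) / ((q/2) * (1/2))) \<le> bin_entropy (q/2)"
proof -
  define a where "a = 1 - q/2"
  have a0: "0 < a" using q1 by (simp add: a_def)
  have e1: "(1/2) / ((1 - q/2) * (1/2)) = 1 / a" by (simp add: a_def)
  have e2: "((1-q)/2) / ((1 - q/2) * (1/2)) = (1-q) / a" using q1 by (simp add: a_def field_simps)
  have e4: "(q/2) * ln ((q/2) / ((q/2) * (1/2))) = (q/2) * ln 2"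
    by (cases "q = 0") auto
  have ha: "1 - q/2 = a" by (simp add: a_def)
  show ?thesis
  proof (cases "q = 0")
    case True then show ?thesis by (simp add: bin_entropy_def)
  next
    case qn0: False
    show ?thesis
    proof (cases "q = 1")
      case True then show ?thesis
        by (simp add: bin_entropy_def ln_div)
    next
      case False
      then have q1': "q < 1" using q1 by simp
      have qp: "0 < q" using q0 qn0 by simp
      have l1: "ln (1 / a) = - ln a" using a0 by (simp add: ln_div)
      have l2: "ln ((1-q) / a) = ln (1-q) - ln a" using a0 q1' by (simp add: ln_div)
      have l3: "ln (q/2) = ln q - ln 2" using qp by (simp add: ln_div)
      have lq: "ln q \<le> 0" using q1 qp by simp
      have lq1: "ln (1-q) \<le> 0" using q0 q1' by simp
      have "bin_entropy (q/2) - ((1/2) * (- ln a) + ((1-q)/2) * (ln (1-q) - ln a) + (q/2) * ln 2)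
          = - (q/2) * ln q - ((1-q)/2) * ln (1-q)"
      proof -
        have key: "-(q/2)*(ln q - ln 2) - (1-q/2)*L - ((1/2)*(-L) + ((1-q)/2)*(ln(1-q) - L) + (q/2)*ln 2) = -(q/2)*ln q - ((1-q)/2)*ln(1-q)" for L
          by (simp add: field_simps)
        show ?thesis unfolding bin_entropy_def l3 a_def using key[of "ln (1 - q/2)"] by simp
      qed
      moreover have "- (q/2) * ln q - ((1-q)/2) * ln (1-q) \<ge> 0"
      proof -
        have "(1 - q) * ln (1 - q) \<le> 0" using lq1 q1' by (simp add: mult_nonneg_nonpos)
        moreover have "q * ln q \<le> 0" using lq qp by (simp add: mult_nonneg_nonpos)
        ultimately show ?thesis by simp
      qed
      ultimately show ?thesis unfolding e1 e2 e4 l1 l2 by simp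
    qed
  qed
qed


context
  fixes n :: nat
    and \<mu> :: "('x \<times> 'y) measure"
    and Wsp :: "'w measure"
    and A :: "(nat \<Rightarrow> 'x \<times> 'y) \<Rightarrow> 'w measure"
    and f :: "'w \<Rightarrow> 'x \<Rightarrow> 'y"
  assumes mu: "prob_space \<mu>"
    and alg[measurable]: "A \<in> PiM {..<n} (\<lambda>_. \<mu>) \<rightarrow>\<^sub>M prob_algebra Wsp"
    and loss_meas[measurable]: "(\<lambda>p. zo_loss f (fst p) (snd p)) \<in> Wsp \<Otimes>\<^sub>M \<mu> \<rightarrow>\<^sub>M count_space UNIV"
begin

interpretation mu: prob_space \<mu> by (rule mu)

abbreviation "ZS \<equiv> supersample_space n \<mu>"
abbreviation "US \<equiv> selector_space n"
abbreviation "ZU \<equiv> ZS \<Otimes>\<^sub>M US"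
abbreviation "SS \<equiv> PiM {..<n} (\<lambda>_. \<mu>)"

lemma sel_meas[measurable]: "(\<lambda>zu. selected_sample n (fst zu) (snd zu)) \<in> ZU \<rightarrow>\<^sub>M SS"
proof -
  have eq: "(\<lambda>zu::((nat \<times> bool) \<Rightarrow> 'x \<times> 'y) \<times> (nat \<Rightarrow> bool). fst zu (j, snd zu j)) = (\<lambda>zu. if snd zu j then fst zu (j,True) else fst zu (j,False))" for j
    by (auto simp: fun_eq_iff)
  show ?thesis unfolding selected_sample_def supersample_space_def selector_space_def
    apply (rule measurable_restrict)
    apply (subst eq)
    apply measurable
    done
qed


lemma prob_ZS: "prob_space ZS"
  unfolding supersample_space_def by (intro prob_space_PiM mu)
lemma prob_US: "prob_space US"
  unfolding selector_space_def by (intro prob_space_PiM prob_space_measure_pmf)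
lemma prob_ZU: "prob_space ZU"
  using prob_ZS prob_US by (intro prob_space_pair)
lemma prob_SS: "prob_space SS"
  by (intro prob_space_PiM mu)

definition "Kn zu = distr (A (selected_sample n (fst zu) (snd zu))) (ZU \<Otimes>\<^sub>M Wsp) (\<lambda>w. (zu, w))"

lemma Kn_meas[measurable]: "Kn \<in> ZU \<rightarrow>\<^sub>M prob_algebra (ZU \<Otimes>\<^sub>M Wsp)"
  unfolding Kn_def by measurable

lemma joint_eq: "joint_law n \<mu> Wsp A = ZU \<bind> Kn"
  unfolding joint_law_def Kn_def[abs_def] ..

lemma prob_joint: "prob_space (joint_law n \<mu> Wsp A)"
  unfolding joint_eq
  by (rule prob_space_bind'[OF _ Kn_meas]) (simp add: space_prob_algebra prob_ZU)

lemma sets_joint[measurable_cong]: "sets (joint_law n \<mu> Wsp A) = sets (ZU \<Otimes>\<^sub>M Wsp)"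
  unfolding joint_eq
  by (rule sets_bind'[OF _ Kn_meas]) (simp add: space_prob_algebra prob_ZU)

lemma A_prob: "s \<in> space SS \<Longrightarrow> prob_space (A s)"
  using measurable_space[OF alg] by (simp add: space_prob_algebra)

lemma A_sets: "s \<in> space SS \<Longrightarrow> sets (A s) = sets Wsp"
  using measurable_space[OF alg] by (simp add: space_prob_algebra)

lemma nn_joint:
  assumes [measurable]: "h \<in> borel_measurable (ZU \<Otimes>\<^sub>M Wsp)"
  shows "(\<integral>\<^sup>+\<omega>. h \<omega> \<partial>joint_law n \<mu> Wsp A) = (\<integral>\<^sup>+zu. \<integral>\<^sup>+w. h (zu, w) \<partial>A (selected_sample n (fst zu) (snd zu)) \<partial>ZU)"
proof -
  have "(\<integral>\<^sup>+\<omega>. h \<omega> \<partial>joint_law n \<mu> Wsp A) = (\<integral>\<^sup>+zu. \<integral>\<^sup>+\<omega>. h \<omega> \<partial>Kn zu \<partial>ZU)"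
    unfolding joint_eq by (rule nn_integral_bind[OF assms measurable_prob_algebraD[OF Kn_meas]])
  also have "\<dots> = (\<integral>\<^sup>+zu. \<integral>\<^sup>+w. h (zu, w) \<partial>A (selected_sample n (fst zu) (snd zu)) \<partial>ZU)"
  proof (rule nn_integral_cong)
    fix zu assume zu: "zu \<in> space ZU"
    then have s: "selected_sample n (fst zu) (snd zu) \<in> space SS"
      using measurable_space[OF sel_meas] by blast
    have m: "(\<lambda>w. (zu, w)) \<in> A (selected_sample n (fst zu) (snd zu)) \<rightarrow>\<^sub>M ZU \<Otimes>\<^sub>M Wsp"
      using zu by (simp add: measurable_cong_sets[OF A_sets[OF s] refl])
    show "(\<integral>\<^sup>+\<omega>. h \<omega> \<partial>Kn zu) = (\<integral>\<^sup>+w. h (zu, w) \<partial>A (selected_sample n (fst zu) (snd zu)))"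
      unfolding Kn_def by (subst nn_integral_distr[OF m]) auto
  qed
  finally show ?thesis .
qed


lemma loss_comp[measurable (raw)]:
  "g \<in> M \<rightarrow>\<^sub>M Wsp \<Longrightarrow> h \<in> M \<rightarrow>\<^sub>M \<mu> \<Longrightarrow> (\<lambda>x. zo_loss f (g x) (h x)) \<in> M \<rightarrow>\<^sub>M count_space UNIV"
  using measurable_compose[OF measurable_Pair loss_meas] by simp

lemma sel_u_meas[measurable]: "(\<lambda>z. selected_sample n z u) \<in> ZS \<rightarrow>\<^sub>M SS"
  unfolding selected_sample_def supersample_space_def
  by (rule measurable_restrict) auto

lemma reindex: "distr ZS SS (\<lambda>z. selected_sample n z u) = SS"
proof -
  have "distr (PiM ({..<n} \<times> UNIV) (\<lambda>_. \<mu>)) (PiM {..<n} (\<lambda>j. (\<lambda>_. \<mu>) ((\<lambda>j. (j, u j)) j)))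
     (\<lambda>\<omega>. \<lambda>j\<in>{..<n}. \<omega> ((\<lambda>j. (j, u j)) j)) = PiM {..<n} (\<lambda>j. (\<lambda>_. \<mu>) ((\<lambda>j. (j, u j)) j))"
    by (rule distr_PiM_reindex) (auto simp: mu inj_on_def)
  then show ?thesis by (simp add: supersample_space_def selected_sample_def)
qed

definition "Kq s z = (\<integral>\<^sup>+w. ennreal (real (zo_loss f w z)) \<partial>A s)"
definition "G s = (\<integral>\<^sup>+z. Kq s z \<partial>\<mu>)"
definition "C = (\<integral>\<^sup>+s. G s \<partial>SS)"

lemma Kq_meas[measurable]: "(\<lambda>(s, z). Kq s z) \<in> borel_measurable (SS \<Otimes>\<^sub>M \<mu>)"
proof -
  have Am: "A \<in> SS \<rightarrow>\<^sub>M subprob_algebra Wsp" by (rule measurable_prob_algebraD[OF alg])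
  have "(\<lambda>p. \<integral>\<^sup>+w. ennreal (real (zo_loss f w (snd p))) \<partial>A (fst p)) \<in> borel_measurable (SS \<Otimes>\<^sub>M \<mu>)"
    apply (rule nn_integral_measurable_subprob_algebra2)
     apply measurable
    using Am by measurable
  then show ?thesis unfolding Kq_def by (simp add: case_prod_beta')
qed

lemma G_meas[measurable]: "G \<in> borel_measurable SS"
  unfolding G_def
  using mu.borel_measurable_nn_integral[OF Kq_meas] by simp

lemma pair_sf: "pair_sigma_finite ZS US"
  by (intro pair_sigma_finite.intro prob_space_imp_sigma_finite prob_ZS prob_US)

lemma ZU_split:
  assumes [measurable]: "h \<in> borel_measurable ZU"
  shows "integral\<^sup>N ZU h = (\<integral>\<^sup>+u. \<integral>\<^sup>+z. h (z, u) \<partial>ZS \<partial>US)"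
  by (rule pair_sigma_finite.nn_integral_snd[OF pair_sf, symmetric]) simp

lemma G_sel_int: "(\<integral>\<^sup>+z. G (selected_sample n z u) \<partial>ZS) = C"
proof -
  have "(\<integral>\<^sup>+z. G (selected_sample n z u) \<partial>ZS) = (\<integral>\<^sup>+s. G s \<partial>distr ZS SS (\<lambda>z. selected_sample n z u))"
    by (subst nn_integral_distr) auto
  then show ?thesis by (simp add: reindex C_def)
qed

lemma G_sel_ZU: "(\<integral>\<^sup>+zu. G (selected_sample n (fst zu) (snd zu)) \<partial>ZU) = C"
proof -
  have "(\<integral>\<^sup>+zu. G (selected_sample n (fst zu) (snd zu)) \<partial>ZU) = (\<integral>\<^sup>+u. \<integral>\<^sup>+z. G (selected_sample n z u) \<partial>ZS \<partial>US)"
    by (subst ZU_split) auto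
  also have "\<dots> = (\<integral>\<^sup>+u. C \<partial>US)" by (simp add: G_sel_int)
  also have "\<dots> = C" using prob_space.emeasure_space_1[OF prob_US] by simp
  finally show ?thesis .
qed

lemma swap_wz:
  assumes s: "s \<in> space SS"
  shows "(\<integral>\<^sup>+w. \<integral>\<^sup>+z. ennreal (real (zo_loss f w z)) \<partial>\<mu> \<partial>A s) = G s"
proof -
  interpret p: pair_sigma_finite "A s" \<mu>
    by (intro pair_sigma_finite.intro prob_space_imp_sigma_finite A_prob s mu)
  have m: "(\<lambda>(w, z). ennreal (real (zo_loss f w z))) \<in> borel_measurable (A s \<Otimes>\<^sub>M \<mu>)"
    by (subst measurable_cong_sets[OF sets_pair_measure_cong[OF A_sets[OF s] refl] refl]) measurable
  show ?thesis unfolding G_def Kq_def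
    by (rule p.Fubini'[OF m, symmetric])
qed

lemma pop_nn: "(\<integral>\<^sup>+\<omega>. \<integral>\<^sup>+z. ennreal (real (zo_loss f (snd \<omega>) z)) \<partial>\<mu> \<partial>joint_law n \<mu> Wsp A) = C"
proof -
  have "(\<integral>\<^sup>+\<omega>. \<integral>\<^sup>+z. ennreal (real (zo_loss f (snd \<omega>) z)) \<partial>\<mu> \<partial>joint_law n \<mu> Wsp A)
     = (\<integral>\<^sup>+zu. \<integral>\<^sup>+w. \<integral>\<^sup>+z. ennreal (real (zo_loss f w z)) \<partial>\<mu> \<partial>A (selected_sample n (fst zu) (snd zu)) \<partial>ZU)"
    by (subst nn_joint) auto
  also have "\<dots> = (\<integral>\<^sup>+zu. G (selected_sample n (fst zu) (snd zu)) \<partial>ZU)"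
    by (intro nn_integral_cong swap_wz measurable_space[OF sel_meas])
  finally show ?thesis using G_sel_ZU by simp
qed

lemma insert_coord:
  assumes i: "i < n" and ui: "u i"
  shows "(\<integral>\<^sup>+z. Kq (selected_sample n z u) (z (i,False)) \<partial>ZS) = C"
proof -
  define p where "p = (i, False)"
  define I' where "I' = {..<n} \<times> (UNIV::bool set) - {p}"
  have ZSe: "ZS = PiM (insert p I') (\<lambda>_. \<mu>)"
    unfolding supersample_space_def I'_def p_def using i by (simp add: insert_absorb)
  interpret ps: product_sigma_finite "\<lambda>_::nat\<times>bool. \<mu>"
    by (simp add: product_sigma_finite_def prob_space_imp_sigma_finite mu)
  have fin: "finite I'" "p \<notin> I'" unfolding I'_def by auto
  have sel_upd: "selected_sample n (x(p:=y)) u = selected_sample n x u" for x y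
    using ui unfolding selected_sample_def p_def by (auto simp: restrict_def fun_eq_iff)
  have m1: "(\<lambda>z. Kq (selected_sample n z u) (z p)) \<in> borel_measurable ZS"
  proof -
    have "(\<lambda>z. (selected_sample n z u, z p)) \<in> ZS \<rightarrow>\<^sub>M SS \<Otimes>\<^sub>M \<mu>"
      using i unfolding p_def by (intro measurable_Pair sel_u_meas) (simp add: supersample_space_def)
    from measurable_compose[OF this Kq_meas] show ?thesis by simp
  qed
  have "(\<integral>\<^sup>+z. Kq (selected_sample n z u) (z p) \<partial>ZS)
      = (\<integral>\<^sup>+x. \<integral>\<^sup>+y. Kq (selected_sample n (x(p:=y)) u) ((x(p:=y)) p) \<partial>\<mu> \<partial>PiM I' (\<lambda>_. \<mu>))"
    using m1 unfolding ZSe by (rule ps.product_nn_integral_insert[OF fin])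
  also have "\<dots> = (\<integral>\<^sup>+x. G (selected_sample n x u) \<partial>PiM I' (\<lambda>_. \<mu>))"
    by (simp add: sel_upd G_def)
  also have "\<dots> = (\<integral>\<^sup>+x. \<integral>\<^sup>+y. G (selected_sample n (x(p:=y)) u) \<partial>\<mu> \<partial>PiM I' (\<lambda>_. \<mu>))"
    by (simp add: sel_upd mu.emeasure_space_1)
  also have "\<dots> = (\<integral>\<^sup>+z. G (selected_sample n z u) \<partial>ZS)"
    unfolding ZSe by (rule ps.product_nn_integral_insert[OF fin, symmetric]) (simp add: ZSe[symmetric])
  finally show ?thesis using G_sel_int unfolding p_def by simp
qed

abbreviation "J \<equiv> joint_law n \<mu> Wsp A"

lemma space_J: "space J = space (ZU \<Otimes>\<^sub>M Wsp)"
  by (rule sets_eq_imp_space_eq[OF sets_joint])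

lemma coord_meas: "i < n \<Longrightarrow> (\<lambda>z. z (i, b)) \<in> ZS \<rightarrow>\<^sub>M \<mu>"
  unfolding supersample_space_def by simp

lemma coord_meas_raw: "i < n \<Longrightarrow> g \<in> M \<rightarrow>\<^sub>M ZS \<Longrightarrow> (\<lambda>x. g x (i, b)) \<in> M \<rightarrow>\<^sub>M \<mu>"
  using measurable_compose[OF _ coord_meas] by blast

lemma ucoord_meas_raw: "i < n \<Longrightarrow> g \<in> M \<rightarrow>\<^sub>M US \<Longrightarrow> (\<lambda>x. g x i) \<in> M \<rightarrow>\<^sub>M count_space UNIV"
  apply (rule measurable_compose[of g M US])
   apply assumption
  unfolding selector_space_def
  by (rule measurable_compose[OF measurable_component_singleton[of i]]) auto

lemma US_set: "i < n \<Longrightarrow> {u \<in> space US. u i = b} \<in> sets US"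
proof -
  assume i: "i < n"
  have "(\<lambda>u. u i) -` {b} \<inter> space US \<in> sets US"
    by (rule measurable_sets[OF ucoord_meas_raw[OF i measurable_id]]) simp
  then show ?thesis by (simp add: vimage_def Int_def conj_commute)
qed

lemma US_half: "emeasure US {u \<in> space US. u i = b} = 1/2" if "i < n"
proof -
  have d: "distr US (measure_pmf (bernoulli_pmf (1/2))) (\<lambda>u. u i) = measure_pmf (bernoulli_pmf (1/2))"
    unfolding selector_space_def using that by (intro distr_PiM_component) (auto simp: prob_space_measure_pmf)
  have "emeasure US {u \<in> space US. u i = b} = emeasure (distr US (measure_pmf (bernoulli_pmf (1/2))) (\<lambda>u. u i)) {b}"
    using that by (subst emeasure_distr) (auto simp: selector_space_def intro!: arg_cong2[where f=emeasure])
  also have "\<dots> = 1/2" unfolding d by (simp add: emeasure_pmf_single divide_ennreal_def)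
  finally show ?thesis .
qed

lemma LU1: assumes i: "i < n"
  shows "emeasure J {\<omega> \<in> space J. Lplus f i \<omega> = 1 \<and> Usel i \<omega>} = C * (1/2)"
proof -
  note cm[measurable (raw)] = coord_meas_raw[OF i] ucoord_meas_raw[OF i]
  define E where "E = {\<omega> \<in> space J. Lplus f i \<omega> = 1 \<and> Usel i \<omega>}"
  have E: "E \<in> sets (ZU \<Otimes>\<^sub>M Wsp)"
    unfolding E_def space_J Lplus_def Usel_def by measurable
  have "emeasure J E = (\<integral>\<^sup>+\<omega>. indicator E \<omega> \<partial>J)"
    using E sets_joint by simp
  also have "\<dots> = (\<integral>\<^sup>+zu. \<integral>\<^sup>+w. indicator E (zu, w) \<partial>A (selected_sample n (fst zu) (snd zu)) \<partial>ZU)"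
    using E by (intro nn_joint) simp
  also have "\<dots> = (\<integral>\<^sup>+zu. (if snd zu i then Kq (selected_sample n (fst zu) (snd zu)) (fst zu (i, False)) else 0) \<partial>ZU)"
  proof (rule nn_integral_cong)
    fix zu assume zu: "zu \<in> space ZU"
    then have s: "selected_sample n (fst zu) (snd zu) \<in> space SS"
      using measurable_space[OF sel_meas] by blast
    have sp: "space (A (selected_sample n (fst zu) (snd zu))) = space Wsp"
      by (rule sets_eq_imp_space_eq[OF A_sets[OF s]])
    have "(\<integral>\<^sup>+w. indicator E (zu, w) \<partial>A (selected_sample n (fst zu) (snd zu)))
       = (\<integral>\<^sup>+w. (if snd zu i then ennreal (real (zo_loss f w (fst zu (i, False)))) else 0) \<partial>A (selected_sample n (fst zu) (snd zu)))"
      using zu by (intro nn_integral_cong) (auto simp: E_def space_J space_pair_measure sp Lplus_def Usel_def zo_loss_def indicator_def)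
    then show "(\<integral>\<^sup>+w. indicator E (zu, w) \<partial>A (selected_sample n (fst zu) (snd zu)))
       = (if snd zu i then Kq (selected_sample n (fst zu) (snd zu)) (fst zu (i, False)) else 0)"
      by (cases "snd zu i") (simp_all add: Kq_def)
  qed
  also have "\<dots> = (\<integral>\<^sup>+u. \<integral>\<^sup>+z. (if u i then Kq (selected_sample n z u) (z (i, False)) else 0) \<partial>ZS \<partial>US)"
  proof -
    have "(\<lambda>zu. (selected_sample n (fst zu) (snd zu), fst zu (i, False))) \<in> ZU \<rightarrow>\<^sub>M SS \<Otimes>\<^sub>M \<mu>"
      by measurable
    from measurable_compose[OF this Kq_meas]
    have "(\<lambda>zu. if snd zu i then Kq (selected_sample n (fst zu) (snd zu)) (fst zu (i, False)) else 0) \<in> borel_measurable ZU"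
      by measurable
    from ZU_split[OF this] show ?thesis by (simp only: fst_conv snd_conv)
  qed
  also have "\<dots> = (\<integral>\<^sup>+u. C * indicator {u \<in> space US. u i = True} u \<partial>US)"
    by (rule nn_integral_cong) (auto simp: insert_coord[OF i] indicator_def)
  also have "\<dots> = C * (1/2)"
    using US_half[OF i, of True] US_set[OF i, of True] by (subst nn_integral_cmult_indicator) auto
  finally show ?thesis unfolding E_def .
qed

interpretation Jp: prob_space J by (rule prob_joint)

lemma N_le1: "(\<integral>\<^sup>+z. ennreal (real (zo_loss f w z)) \<partial>\<mu>) \<le> 1"
proof -
  have "(\<integral>\<^sup>+z. ennreal (real (zo_loss f w z)) \<partial>\<mu>) \<le> (\<integral>\<^sup>+z. 1 \<partial>\<mu>)"
    by (intro nn_integral_mono) (simp add: zo_loss_def)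
  then show ?thesis by (simp add: mu.emeasure_space_1)
qed

lemma C_le1: "C \<le> 1"
proof -
  have "C \<le> (\<integral>\<^sup>+\<omega>. 1 \<partial>J)"
    unfolding pop_nn[symmetric] by (intro nn_integral_mono N_le1)
  then show ?thesis by (simp add: Jp.emeasure_space_1)
qed

definition "q = enn2real C"

lemma C_q: "C = ennreal q"
proof -
  have "C \<noteq> \<top>" using C_le1 by (auto simp: top_unique)
  then show ?thesis unfolding q_def by (simp add: ennreal_enn2real_if)
qed

lemma q_bounds: "0 \<le> q" "q \<le> 1"
  using C_le1 unfolding q_def by (auto simp: enn2real_leI enn2real_le)

lemma pop_q: "pop_risk n \<mu> Wsp A f = q"
proof -
  have inner: "(\<integral>z. real (zo_loss f w z) \<partial>\<mu>) = enn2real (\<integral>\<^sup>+z. ennreal (real (zo_loss f w z)) \<partial>\<mu>)" if w: "w \<in> space Wsp" for w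
  proof (rule integral_eq_nn_integral)
    have "(\<lambda>z. zo_loss f w z) \<in> \<mu> \<rightarrow>\<^sub>M count_space UNIV"
      using w by measurable
    then show "(\<lambda>z. real (zo_loss f w z)) \<in> borel_measurable \<mu>" by measurable
  qed auto
  have m: "(\<lambda>\<omega>. \<integral>z. real (zo_loss f (snd \<omega>) z) \<partial>\<mu>) \<in> borel_measurable J"
    by (subst measurable_cong_sets[OF sets_joint refl]) measurable
  have "pop_risk n \<mu> Wsp A f = enn2real (\<integral>\<^sup>+\<omega>. ennreal (\<integral>z. real (zo_loss f (snd \<omega>) z) \<partial>\<mu>) \<partial>J)"
    unfolding pop_risk_def by (rule integral_eq_nn_integral[OF m]) auto
  also have "\<dots> = enn2real (\<integral>\<^sup>+\<omega>. \<integral>\<^sup>+z. ennreal (real (zo_loss f (snd \<omega>) z)) \<partial>\<mu> \<partial>J)"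
  proof (intro arg_cong[where f=enn2real] nn_integral_cong)
    fix \<omega> assume "\<omega> \<in> space J"
    then have w: "snd \<omega> \<in> space Wsp" by (auto simp: space_J space_pair_measure)
    have "(\<integral>\<^sup>+z. ennreal (real (zo_loss f (snd \<omega>) z)) \<partial>\<mu>) \<noteq> \<top>"
      using N_le1[of "snd \<omega>"] by (auto simp: top_unique)
    then show "ennreal (\<integral>z. real (zo_loss f (snd \<omega>) z) \<partial>\<mu>) = (\<integral>\<^sup>+z. ennreal (real (zo_loss f (snd \<omega>) z)) \<partial>\<mu>)"
      by (simp add: inner[OF w] ennreal_enn2real_if)
  qed
  also have "\<dots> = q" by (simp add: pop_nn q_def)
  finally show ?thesis .
qed

lemma L_meas: assumes i: "i < n" shows "Lplus f i \<in> J \<rightarrow>\<^sub>M count_space UNIV"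
proof -
  note cm[measurable (raw)] = coord_meas_raw[OF i] ucoord_meas_raw[OF i]
  show ?thesis unfolding Lplus_def
    by (subst measurable_cong_sets[OF sets_joint refl]) measurable
qed

lemma U_meas: assumes i: "i < n" shows "Usel i \<in> J \<rightarrow>\<^sub>M count_space UNIV"
proof -
  note cm[measurable (raw)] = coord_meas_raw[OF i] ucoord_meas_raw[OF i]
  show ?thesis unfolding Usel_def
    by (subst measurable_cong_sets[OF sets_joint refl]) measurable
qed

lemma nn_joint_fst:
  assumes [measurable]: "h \<in> borel_measurable ZU"
  shows "(\<integral>\<^sup>+\<omega>. h (fst \<omega>) \<partial>J) = (\<integral>\<^sup>+zu. h zu \<partial>ZU)"
proof -
  have "(\<integral>\<^sup>+\<omega>. h (fst \<omega>) \<partial>J) = (\<integral>\<^sup>+zu. \<integral>\<^sup>+w. h zu \<partial>A (selected_sample n (fst zu) (snd zu)) \<partial>ZU)"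
    by (subst nn_joint) auto
  also have "\<dots> = (\<integral>\<^sup>+zu. h zu \<partial>ZU)"
  proof (rule nn_integral_cong)
    fix zu assume zu: "zu \<in> space ZU"
    then have s: "selected_sample n (fst zu) (snd zu) \<in> space SS"
      using measurable_space[OF sel_meas] by blast
    show "(\<integral>\<^sup>+w. h zu \<partial>A (selected_sample n (fst zu) (snd zu))) = h zu"
      using prob_space.emeasure_space_1[OF A_prob[OF s]] by simp
  qed
  finally show ?thesis .
qed

lemma U_half: assumes i: "i < n" shows "emeasure J {\<omega> \<in> space J. Usel i \<omega> = b} = 1/2"
proof -
  note cm[measurable (raw)] = coord_meas_raw[OF i] ucoord_meas_raw[OF i]
  define B where "B = {zu \<in> space ZU. snd zu i = b}"
  have B: "B \<in> sets ZU" unfolding B_def by measurable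
  have E: "{\<omega> \<in> space J. Usel i \<omega> = b} \<in> sets J"
    using U_meas[OF i] by measurable
  have "emeasure J {\<omega> \<in> space J. Usel i \<omega> = b} = (\<integral>\<^sup>+\<omega>. indicator {\<omega> \<in> space J. Usel i \<omega> = b} \<omega> \<partial>J)"
    using E by simp
  also have "\<dots> = (\<integral>\<^sup>+\<omega>. indicator B (fst \<omega>) \<partial>J)"
    by (rule nn_integral_cong) (auto simp: B_def Usel_def space_J space_pair_measure indicator_def)
  also have "\<dots> = (\<integral>\<^sup>+zu. indicator B zu \<partial>ZU)"
    using B by (intro nn_joint_fst) simp
  also have "\<dots> = (\<integral>\<^sup>+u. \<integral>\<^sup>+z. indicator B (z, u) \<partial>ZS \<partial>US)"
    using B by (intro ZU_split) simp
  also have "\<dots> = (\<integral>\<^sup>+u. indicator {u \<in> space US. u i = b} u \<partial>US)"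
  proof (rule nn_integral_cong)
    fix u assume u: "u \<in> space US"
    have "(\<integral>\<^sup>+z. indicator B (z, u) \<partial>ZS) = (\<integral>\<^sup>+z. indicator {u \<in> space US. u i = b} u \<partial>ZS)"
      using u by (intro nn_integral_cong) (auto simp: B_def space_pair_measure indicator_def)
    then show "(\<integral>\<^sup>+z. indicator B (z, u) \<partial>ZS) = indicator {u \<in> space US. u i = b} u"
      using prob_space.emeasure_space_1[OF prob_ZS] by simp
  qed
  also have "\<dots> = 1/2" using US_half[OF i] US_set[OF i] by simp
  finally show ?thesis .
qed

lemma LU_F1: assumes i: "i < n"
  and interp: "AE \<omega> in J. zo_loss f (snd \<omega>) (fst (fst \<omega>) (i, snd (fst \<omega>) i)) = 0"
  shows "emeasure J {\<omega> \<in> space J. Lplus f i \<omega> = 1 \<and> Usel i \<omega> = False} = 0"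
proof (rule emeasure_eq_0_AE, rule AE_mp[OF interp], intro AE_I2 impI notI)
  fix \<omega> assume h: "zo_loss f (snd \<omega>) (fst (fst \<omega>) (i, snd (fst \<omega>) i)) = 0"
    and c: "Lplus f i \<omega> = 1 \<and> Usel i \<omega> = False"
  then have "snd (fst \<omega>) i = False" by (simp add: Usel_def)
  with h c show False by (simp add: Lplus_def)
qed

lemma L01: "Lplus f i \<omega> = 0 \<or> Lplus f i \<omega> = 1"
  by (simp add: Lplus_def zo_loss_def)

lemma split_U: assumes i: "i < n" shows "measure J {\<omega> \<in> space J. Usel i \<omega> = b} = measure J {\<omega> \<in> space J. Lplus f i \<omega> = 0 \<and> Usel i \<omega> = b} + measure J {\<omega> \<in> space J. Lplus f i \<omega> = 1 \<and> Usel i \<omega> = b}"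
proof -
  note Lm[measurable] = L_meas[OF i] and Um[measurable] = U_meas[OF i]
  have "{\<omega> \<in> space J. Usel i \<omega> = b} = {\<omega> \<in> space J. Lplus f i \<omega> = 0 \<and> Usel i \<omega> = b} \<union> {\<omega> \<in> space J. Lplus f i \<omega> = 1 \<and> Usel i \<omega> = b}" (is "?L = ?R")
  proof (rule set_eqI)
    fix x show "x \<in> ?L \<longleftrightarrow> x \<in> ?R" using L01[of i x] by (simp only: mem_Collect_eq Un_iff) blast
  qed
  have mA: "{\<omega> \<in> space J. Lplus f i \<omega> = 0 \<and> Usel i \<omega> = b} \<in> sets J" by measurable
  have mB: "{\<omega> \<in> space J. Lplus f i \<omega> = 1 \<and> Usel i \<omega> = b} \<in> sets J" by measurable
  have d: "{\<omega> \<in> space J. Lplus f i \<omega> = 0 \<and> Usel i \<omega> = b} \<inter> {\<omega> \<in> space J. Lplus f i \<omega> = 1 \<and> Usel i \<omega> = b} = {}" by auto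
  show ?thesis unfolding \<open>?L = ?R\<close> by (rule Jp.finite_measure_Union[OF mA mB d])
qed

lemma split_L: assumes i: "i < n" shows "measure J {\<omega> \<in> space J. Lplus f i \<omega> = a} = measure J {\<omega> \<in> space J. Lplus f i \<omega> = a \<and> Usel i \<omega>} + measure J {\<omega> \<in> space J. Lplus f i \<omega> = a \<and> \<not> Usel i \<omega>}"
proof -
  note Lm[measurable] = L_meas[OF i] and Um[measurable] = U_meas[OF i]
  have "{\<omega> \<in> space J. Lplus f i \<omega> = a} = {\<omega> \<in> space J. Lplus f i \<omega> = a \<and> Usel i \<omega>} \<union> {\<omega> \<in> space J. Lplus f i \<omega> = a \<and> \<not> Usel i \<omega>}" (is "?L = ?R")
    by blast
  have mA: "{\<omega> \<in> space J. Lplus f i \<omega> = a \<and> Usel i \<omega>} \<in> sets J" by measurable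
  have mB: "{\<omega> \<in> space J. Lplus f i \<omega> = a \<and> \<not> Usel i \<omega>} \<in> sets J" by measurable
  have d: "{\<omega> \<in> space J. Lplus f i \<omega> = a \<and> Usel i \<omega>} \<inter> {\<omega> \<in> space J. Lplus f i \<omega> = a \<and> \<not> Usel i \<omega>} = {}" by blast
  show ?thesis unfolding \<open>?L = ?R\<close> by (rule Jp.finite_measure_Union[OF mA mB d])
qed

lemma half_enn: "(1/2::ennreal) = ennreal (1/2)"
  by (metis divide_ennreal ennreal_1 ennreal_numeral zero_le_one zero_less_numeral)

lemma PU: assumes i: "i < n" shows "measure J {\<omega> \<in> space J. Usel i \<omega> = b} = 1/2"
proof -
  have "ennreal (measure J {\<omega> \<in> space J. Usel i \<omega> = b}) = ennreal (1/2)"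
    using U_half[OF i, of b] unfolding Jp.emeasure_eq_measure half_enn .
  then show ?thesis by (subst (asm) ennreal_inj) auto
qed

lemma PUT: assumes i: "i < n" shows "measure J {\<omega> \<in> space J. Usel i \<omega>} = 1/2" using PU[OF i, of True] by simp

lemma split_UT: assumes i: "i < n" shows "measure J {\<omega> \<in> space J. Usel i \<omega>} = measure J {\<omega> \<in> space J. Lplus f i \<omega> = 0 \<and> Usel i \<omega>} + measure J {\<omega> \<in> space J. Lplus f i \<omega> = 1 \<and> Usel i \<omega>}"
  using split_U[OF i, of True] by simp

lemma PUF: assumes i: "i < n" shows "measure J {\<omega> \<in> space J. \<not> Usel i \<omega>} = 1/2" using PU[OF i, of False] by simp

lemma split_UF: assumes i: "i < n" shows "measure J {\<omega> \<in> space J. \<not> Usel i \<omega>} = measure J {\<omega> \<in> space J. Lplus f i \<omega> = 0 \<and> \<not> Usel i \<omega>} + measure J {\<omega> \<in> space J. Lplus f i \<omega> = 1 \<and> \<not> Usel i \<omega>}"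
  using split_U[OF i, of False] by simp

lemma P11: assumes i: "i < n" shows "measure J {\<omega> \<in> space J. Lplus f i \<omega> = 1 \<and> Usel i \<omega>} = q/2"
proof -
  have "ennreal (measure J {\<omega> \<in> space J. Lplus f i \<omega> = 1 \<and> Usel i \<omega>}) = ennreal q * ennreal (1/2)"
    using LU1[OF i] unfolding C_q Jp.emeasure_eq_measure half_enn .
  also have "\<dots> = ennreal (q * (1/2))" using q_bounds by (intro ennreal_mult'[symmetric]) simp
  also have "\<dots> = ennreal (q/2)" by simp
  finally show ?thesis using q_bounds by (subst (asm) ennreal_inj) auto
qed

lemma P10: assumes i: "i < n"
  and interp: "AE \<omega> in J. zo_loss f (snd \<omega>) (fst (fst \<omega>) (i, snd (fst \<omega>) i)) = 0"
  shows "measure J {\<omega> \<in> space J. Lplus f i \<omega> = 1 \<and> \<not> Usel i \<omega>} = 0"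
  using LU_F1[OF i interp] unfolding Jp.emeasure_eq_measure by simp

lemma lin1: "(a::real) = b + c \<Longrightarrow> c = x \<Longrightarrow> a = y \<Longrightarrow> b = y - x" by simp
lemma lin2: "(a::real) = b + c \<Longrightarrow> b = x \<Longrightarrow> c = y \<Longrightarrow> a = x + y" by simp

lemma P0T: assumes i: "i < n" shows "measure J {\<omega> \<in> space J. Lplus f i \<omega> = 0 \<and> Usel i \<omega>} = (1 - q)/2"
  using lin1[OF split_UT[OF i] P11[OF i] PUT[OF i]] by simp

lemma P0F: assumes i: "i < n"
  and interp: "AE \<omega> in J. zo_loss f (snd \<omega>) (fst (fst \<omega>) (i, snd (fst \<omega>) i)) = 0"
  shows "measure J {\<omega> \<in> space J. Lplus f i \<omega> = 0 \<and> \<not> Usel i \<omega>} = 1/2"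
  using lin1[OF split_UF[OF i] P10[OF i interp] PUF[OF i]] by simp

lemma PX0: assumes i: "i < n"
  and interp: "AE \<omega> in J. zo_loss f (snd \<omega>) (fst (fst \<omega>) (i, snd (fst \<omega>) i)) = 0"
  shows "measure J {\<omega> \<in> space J. Lplus f i \<omega> = 0} = 1 - q/2"
  using lin2[OF split_L[OF i, of 0] P0T[OF i] P0F[OF i interp]] by (simp add: field_simps)

lemma PX1: assumes i: "i < n"
  and interp: "AE \<omega> in J. zo_loss f (snd \<omega>) (fst (fst \<omega>) (i, snd (fst \<omega>) i)) = 0"
  shows "measure J {\<omega> \<in> space J. Lplus f i \<omega> = 1} = q/2"
  using lin2[OF split_L[OF i, of 1] P11[OF i] P10[OF i interp]] by simp

lemma MI_i:
  assumes i: "i < n"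
  and interp: "AE \<omega> in J. zo_loss f (snd \<omega>) (fst (fst \<omega>) (i, snd (fst \<omega>) i)) = 0"
  shows "prob_space.mutual_information J (exp 1) (count_space UNIV) (count_space UNIV) (Lplus f i) (Usel i)
     \<le> bin_entropy (pop_risk n \<mu> Wsp A f / 2)"
proof -
  note Lm = L_meas[OF i] and Um = U_meas[OF i]
  define B :: "(nat \<times> bool) set" where "B = {(0,False),(0,True),(1,False),(1,True)}"
  have supp: "measure J {\<omega> \<in> space J. (Lplus f i \<omega>, Usel i \<omega>) = p} = 0" if "p \<notin> B" for p
  proof -
    obtain a b where p: "p = (a, b)" by (cases p)
    have a: "a \<noteq> 0" "a \<noteq> 1" using that unfolding p B_def by (cases b; auto)+
    have ne: "Lplus f i \<omega> \<noteq> a" for \<omega> using L01[of i \<omega>] a by auto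
    have e: "{\<omega> \<in> space J. (Lplus f i \<omega>, Usel i \<omega>) = p} = {}"
      unfolding p using ne by simp
    show ?thesis unfolding e by simp
  qed
  have "prob_space.mutual_information J (exp 1) (count_space UNIV) (count_space UNIV) (Lplus f i) (Usel i)
     = (\<Sum>p\<in>B. measure J {\<omega> \<in> space J. (Lplus f i \<omega>, Usel i \<omega>) = p} *
          ln (measure J {\<omega> \<in> space J. (Lplus f i \<omega>, Usel i \<omega>) = p} /
              (measure J {\<omega> \<in> space J. Lplus f i \<omega> = fst p} * measure J {\<omega> \<in> space J. Usel i \<omega> = snd p})))"
    by (rule MI_count[OF prob_joint Lm Um _ supp]) (simp add: B_def)
  also have "\<dots> = (1/2) * ln ((1/2) / ((1 - q/2) * (1/2))) + ((1-q)/2) * ln (((1-q)/2) / ((1 - q/2) * (1/2)))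
       + 0 * ln (0 / ((q/2) * (1/2))) + (q/2) * ln ((q/2) / ((q/2) * (1/2)))"
    unfolding B_def
    apply (subst sum.insert; simp only: finite.emptyI finite_insert insert_iff empty_iff prod.inject simp_thms zero_neq_one one_neq_zero)+
    apply (simp only: sum.empty fst_conv snd_conv add_0_right)
    apply (simp only: prod.inject eq_True eq_False simp_thms P0F[OF i interp] P0T[OF i] P10[OF i interp] P11[OF i] PUT[OF i] PUF[OF i] PX0[OF i interp] PX1[OF i interp])
    done
  also have "\<dots> \<le> bin_entropy (q/2)"
    by (rule arith_MI[OF q_bounds])
  finally show ?thesis by (simp add: pop_q)
qed

lemma H_nonneg: "0 \<le> bin_entropy (pop_risk n \<mu> Wsp A f / 2)"
proof -
  have p0: "0 \<le> q/2" and p1: "q/2 \<le> 1/2" using q_bounds by auto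
  have a: "0 \<le> - (q/2) * ln (q/2)"
  proof (cases "q = 0")
    case False
    then have "0 < q/2" using p0 by auto
    then have "ln (q/2) \<le> 0" using p1 by simp
    then show ?thesis using p0 by (simp add: mult_nonneg_nonpos)
  qed simp
  have b: "0 \<le> - (1 - q/2) * ln (1 - q/2)"
  proof -
    have "0 < 1 - q/2" using p1 by simp
    then have l: "ln (1 - q/2) \<le> 0" using p0 by simp
    have c: "q/2 - 1 \<le> 0" using p1 by simp
    show ?thesis using mult_nonpos_nonpos[OF c l] by simp
  qed
  show ?thesis unfolding pop_q bin_entropy_def using a b by linarith
qed

end

theorem theorem7:
  fixes n :: nat
    and \<mu> :: "('x \<times> 'y) measure"
    and Wsp :: "'w measure"
    and A :: "(nat \<Rightarrow> 'x \<times> 'y) \<Rightarrow> 'w measure"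
    and f :: "'w \<Rightarrow> 'x \<Rightarrow> 'y"
  assumes mu: "prob_space \<mu>"
    and alg: "A \<in> PiM {..<n} (\<lambda>_. \<mu>) \<rightarrow>\<^sub>M prob_algebra Wsp"
    and loss_meas: "(\<lambda>p. zo_loss f (fst p) (snd p)) \<in> Wsp \<Otimes>\<^sub>M \<mu> \<rightarrow>\<^sub>M count_space UNIV"
    and interp: "\<And>i. i < n \<Longrightarrow>
       AE \<omega> in joint_law n \<mu> Wsp A. zo_loss f (snd \<omega>) (fst (fst \<omega>) (i, snd (fst \<omega>) i)) = 0"
  shows "(\<Sum>i<n. prob_space.mutual_information (joint_law n \<mu> Wsp A) (exp 1)
              (count_space UNIV) (count_space UNIV) (Lplus f i) (Usel i)) / real n
         \<le> bin_entropy (pop_risk n \<mu> Wsp A f / 2)"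
proof -
  let ?H = "bin_entropy (pop_risk n \<mu> Wsp A f / 2)"
  have "(\<Sum>i<n. prob_space.mutual_information (joint_law n \<mu> Wsp A) (exp 1)
              (count_space UNIV) (count_space UNIV) (Lplus f i) (Usel i)) \<le> (\<Sum>i<n. ?H)"
    by (rule sum_mono) (rule MI_i[OF mu alg loss_meas], simp, rule interp, simp)
  also have "\<dots> = real n * ?H" by simp
  finally have s: "(\<Sum>i<n. prob_space.mutual_information (joint_law n \<mu> Wsp A) (exp 1)
              (count_space UNIV) (count_space UNIV) (Lplus f i) (Usel i)) \<le> real n * ?H" .
  show ?thesis
  proof (cases "n = 0")
    case True
    then show ?thesis using H_nonneg[OF mu alg loss_meas] by simp
  next
    case False
    then show ?thesis using s by (simp add: divide_le_eq mult.commute)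
  qed
qed

end
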